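(* Let $\alpha=(\alpha_1,\dots,\alpha_s)\in\mathbb{K}_s$ and let $1\le i<j\le s$. Then $\alpha^i=-\overline{\alpha^j}$ (as tuples) if and only if $\alpha$ is symmetric and $i+j=s+1$.
   Context: $\mathbb{K}_s=\{(\alpha_1,\dots,\alpha_s)\in\mathbb{Z}^s:\ \alpha_k\alpha_{k+1}<0 \text{ for all } 1\le k\le s-1\}$, with all entries nonzero. For $\beta=(\beta_1,\dots,\beta_s)\in\mathbb{Z}^s$, $-\beta=(-\beta_1,\dots,-\beta_s)$ and $\overline{\beta}=(\beta_s,\dots,\beta_1)$; $\beta$ is symmetric if $\beta=-\overline{\beta}$. For $1\le i\le s$, $\alpha^i=(\alpha_1,\dots,\alpha_{i-1},\alpha_i*1,\alpha_{i+1},\dots,\alpha_s)$, where $\alpha_i*1=\alpha_i-1$ if $\alpha_i>0$ and $\alpha_i*1=\alpha_i+1$ otherwise. *)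

theory Defs
  imports Main
begin

(* Tuples (alpha_1,...,alpha_s) are represented as int lists of length s;
   alpha_k is  a ! (k-1). *)

definition K :: "nat \<Rightarrow> int list set" where
  "K s = {a. length a = s \<and> (\<forall>k<s. a ! k \<noteq> 0) \<and>
             (\<forall>k. 1 \<le> k \<and> k \<le> s - 1 \<longrightarrow> a ! (k-1) * a ! k < 0)}"

definition neg :: "int list \<Rightarrow> int list" where
  "neg b = map uminus b"

definition bar :: "int list \<Rightarrow> int list" where
  "bar b = rev b"

definition symmetric :: "int list \<Rightarrow> bool" where
  "symmetric b \<longleftrightarrow> b = neg (bar b)"

definition star1 :: "int \<Rightarrow> int" where
  "star1 x = (if x > 0 then x - 1 else x + 1)"

definition sup_i :: "int list \<Rightarrow> nat \<Rightarrow> int list" where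
  "sup_i a i = a[i - 1 := star1 (a ! (i - 1))]"

end

theory Submission
  imports Defs
begin

lemma star1_ne: "x \<noteq> 0 \<Longrightarrow> star1 x \<noteq> x" by (simp add: star1_def)
lemma star1_ne2: "x \<noteq> 0 \<Longrightarrow> star1 x \<noteq> - x" by (simp add: star1_def)
lemma star1_odd: "x \<noteq> 0 \<Longrightarrow> star1 (- x) = - star1 x" by (simp add: star1_def)

lemma nb: "k < length c \<Longrightarrow> neg (bar c) ! k = - (c ! (length c - 1 - k))"
  by (simp add: neg_def bar_def rev_nth)

theorem lemma1:
  fixes a :: "int list" and s i j :: nat
  assumes "a \<in> K s" and "1 \<le> i" and "i < j" and "j \<le> s"
  shows "sup_i a i = neg (bar (sup_i a j)) \<longleftrightarrow> symmetric a \<and> i + j = s + 1"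
proof -
  have len: "length a = s" and nz: "\<And>k. k < s \<Longrightarrow> a ! k \<noteq> 0"
    and alt: "\<And>k. 1 \<le> k \<Longrightarrow> k \<le> s - 1 \<Longrightarrow> a ! (k-1) * a ! k < 0"
    using assms(1) by (auto simp: K_def)
  define p where "p = i - 1"
  define q where "q = j - 1"
  have pq: "p < q" "q < s" using assms p_def q_def by auto
  define f where "f k = (if k = p then star1 (a!p) else a!k)" for k
  define g where "g k = (if k = q then star1 (a!q) else a!k)" for k
  have fi: "\<And>k. k < s \<Longrightarrow> sup_i a i ! k = f k"
    using len pq by (auto simp: sup_i_def f_def p_def nth_list_update)
  have gj: "\<And>k. k < s \<Longrightarrow> sup_i a j ! k = g k"
    using len pq by (auto simp: sup_i_def g_def q_def nth_list_update)
  have l1: "length (sup_i a i) = s" "length (sup_i a j) = s" using len by (auto simp: sup_i_def)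
  have eqv: "sup_i a i = neg (bar (sup_i a j)) \<longleftrightarrow> (\<forall>k<s. f k = - g (s - 1 - k))"
  proof
    assume E: "sup_i a i = neg (bar (sup_i a j))"
    show "\<forall>k<s. f k = - g (s - 1 - k)"
    proof (intro allI impI)
      fix k assume k: "k < s"
      have "sup_i a i ! k = neg (bar (sup_i a j)) ! k" using E by simp
      then show "f k = - g (s - 1 - k)" using k fi gj nb[of k "sup_i a j"] l1 by simp
    qed
  next
    assume H: "\<forall>k<s. f k = - g (s - 1 - k)"
    show "sup_i a i = neg (bar (sup_i a j))"
    proof (rule nth_equalityI)
      show "length (sup_i a i) = length (neg (bar (sup_i a j)))" using l1 by (simp add: neg_def bar_def)
      fix k assume "k < length (sup_i a i)"
      then have k: "k < s" using l1 by simp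
      show "sup_i a i ! k = neg (bar (sup_i a j)) ! k"
        using k fi gj nb[of k "sup_i a j"] l1 H by simp
    qed
  qed
  have symeq: "symmetric a \<longleftrightarrow> (\<forall>k<s. a ! k = - a ! (s - 1 - k))"
  proof
    assume "symmetric a"
    then have S: "a = neg (bar a)" by (simp add: symmetric_def)
    show "\<forall>k<s. a ! k = - a ! (s - 1 - k)"
    proof (intro allI impI)
      fix k assume k: "k < s"
      have "a ! k = neg (bar a) ! k" using S by simp
      then show "a ! k = - a ! (s - 1 - k)" using nb[of k a] len k by simp
    qed
  next
    assume H: "\<forall>k<s. a ! k = - a ! (s - 1 - k)"
    show "symmetric a" unfolding symmetric_def
    proof (rule nth_equalityI)
      show "length a = length (neg (bar a))" by (simp add: neg_def bar_def)
      fix k assume "k < length a"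
      then show "a ! k = neg (bar a) ! k" using nb[of k a] len H[rule_format, of k] by simp
    qed
  qed
  have ij: "i + j = s + 1 \<longleftrightarrow> p + q = s - 1" using assms p_def q_def by auto
  show ?thesis
    unfolding eqv symeq ij
  proof
    assume H: "\<forall>k<s. f k = - g (s - 1 - k)"
    have pqs: "p + q = s - 1"
    proof (rule ccontr)
      assume ne: "p + q \<noteq> s - 1"
      define r where "r = s - 1 - p"
      have r: "r < s" "r \<noteq> q" using pq ne r_def by auto
      have h1: "star1 (a!p) = - a ! r" using H[rule_format, of p] pq r
        by (simp add: f_def g_def r_def)
      show False
      proof (cases "r = p")
        case True
        then show ?thesis using h1 star1_ne2[OF nz[of p]] pq by simp
      next
        case False
        have "s - 1 - r = p" using r_def pq by auto
        then have "a ! r = - a ! p" using H[rule_format, of r] r False pq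
          by (simp add: f_def g_def)
        then show ?thesis using h1 star1_ne[OF nz[of p]] pq by simp
      qed
    qed
    have gen: "\<And>k. k < s \<Longrightarrow> k \<noteq> p \<Longrightarrow> k \<noteq> q \<Longrightarrow> a ! k = - a ! (s - 1 - k)"
    proof -
      fix k assume k: "k < s" "k \<noteq> p" "k \<noteq> q"
      have "s - 1 - k \<noteq> p" "s - 1 - k \<noteq> q" using k pqs pq by auto
      then show "a ! k = - a ! (s - 1 - k)" using H[rule_format, of k] k by (simp add: f_def g_def)
    qed
    have opp: "a ! p * a ! q < 0"
    proof (cases "q = p + 1")
      case True
      then show ?thesis using alt[of q] pq by simp
    next
      case False
      have idx: "s - 1 - (p+1) = q - 1" using pq pqs by auto
      have e: "a ! (p+1) = - a ! (q - 1)"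
        using gen[of "p+1"] pq pqs False unfolding idx by simp
      have a1: "a ! p * a ! (p+1) < 0" using alt[of "p+1"] pq by simp
      have a2: "a ! (q-1) * a ! q < 0" using alt[of q] pq by simp
      have "(a ! p * a ! (p+1)) * (a ! (q-1) * a ! q) > 0" using a1 a2 mult_neg_neg by blast
      then have "(a ! p * a ! q) * (- (a ! (q-1) * a ! (q-1))) > 0" using e
        by (simp add: algebra_simps)
      moreover have "a ! (q-1) * a ! (q-1) \<ge> 0" by simp
      ultimately show ?thesis
        by (metis mult_le_0_iff neg_le_0_iff_le not_le)
    qed
    have idq: "s - 1 - p = q" using pq pqs by auto
    have hp: "star1 (a!p) = - star1 (a!q)"
      using H[rule_format, of p] pq unfolding idq by (simp add: f_def g_def)
    have app: "a ! p = - a ! q"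
      using hp opp by (auto simp: star1_def mult_less_0_iff split: if_splits)
    have "\<forall>k<s. a ! k = - a ! (s - 1 - k)"
    proof (intro allI impI)
      fix k assume k: "k < s"
      show "a ! k = - a ! (s - 1 - k)"
      proof (cases "k = p \<or> k = q")
        case True
        have "s - Suc p = q" "s - Suc q = p" using pqs pq by auto
        then show ?thesis using app True by auto
      next
        case False
        then show ?thesis using gen[of k] k by auto
      qed
    qed
    then show "(\<forall>k<s. a ! k = - a ! (s - 1 - k)) \<and> p + q = s - 1" using pqs by blast
  next
    assume A: "(\<forall>k<s. a ! k = - a ! (s - 1 - k)) \<and> p + q = s - 1"
    then have S: "\<And>k. k < s \<Longrightarrow> a ! k = - a ! (s - 1 - k)" and pqs: "p + q = s - 1" by blast+
    show "\<forall>k<s. f k = - g (s - 1 - k)"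
    proof (intro allI impI)
      fix k assume k: "k < s"
      show "f k = - g (s - 1 - k)"
      proof (cases "k = p")
        case True
        have "s - 1 - k = q" using True pqs by auto
        have "s - Suc p = q" using pqs pq by auto
        moreover have "a ! q = - a ! p" using S[of p] pq \<open>s - Suc p = q\<close> by simp
        ultimately show ?thesis using True star1_odd[OF nz[of p]] pq by (simp add: f_def g_def)
      next
        case False
        show ?thesis
        proof (cases "k = q")
          case True
          have "s - 1 - k = p" using True pqs by auto
          then show ?thesis using True False S[of k] k pq by (simp add: f_def g_def)
        next
          case False2: False
          have "s - 1 - k \<noteq> q" using False pqs k by auto
          then show ?thesis using False False2 S[of k] k by (simp add: f_def g_def)
        qed
      qed
    qed
  qed
qed

end
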